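(* Let $p,p'\ge1$ with $|p-p'|=1$, $p_{\min}=\min\{p,p'\}$, and let $S$ be a Sturmian word. A palindrome $X$ is maximal in $S$ if and only if the palindrome $a^{p_{\min}}\,b\,\alpha_{(p,p')}(X)\,a^{p_{\min}}$ is maximal in $\alpha_{(p,p')}(S)$.
   Context: $\alpha_{(p,p')}$ is the morphism $a\mapsto a^pb$, $b\mapsto a^{p'}b$. A Sturmian word is a right-infinite aperiodic word over $\{a,b\}$ with exactly $n+1$ factors of each length $n$. A palindrome is a word equal to its reverse. A palindrome $P$ is maximal in a word $W$ if $lPl'$ is a factor of $W$ for some letters $l\neq l'$ in $\{a,b\}$. *)

theory Defs
  imports Main
begin

datatype letter = a | b

type_synonym word = "letter list"
type_synonym iword = "nat \<Rightarrow> letter"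

definition factor :: "word \<Rightarrow> iword \<Rightarrow> bool" where
  "factor u W \<longleftrightarrow> (\<exists>i. u = map W [i..<i + length u])"

definition factors_of_length :: "iword \<Rightarrow> nat \<Rightarrow> word set" where
  "factors_of_length W n = {u. length u = n \<and> factor u W}"

definition eventually_periodic :: "iword \<Rightarrow> bool" where
  "eventually_periodic W \<longleftrightarrow> (\<exists>q>0. \<exists>N. \<forall>n\<ge>N. W (n + q) = W n)"

definition sturmian :: "iword \<Rightarrow> bool" where
  "sturmian W \<longleftrightarrow> \<not> eventually_periodic W \<and>
     (\<forall>n. card (factors_of_length W n) = n + 1)"

definition palindrome :: "word \<Rightarrow> bool" where
  "palindrome P \<longleftrightarrow> rev P = P"

definition maximal_pal :: "word \<Rightarrow> iword \<Rightarrow> bool" where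
  "maximal_pal P W \<longleftrightarrow> palindrome P \<and>
     (\<exists>l l'. l \<noteq> l' \<and> factor (l # P @ [l']) W)"

fun alpha_letter :: "nat \<Rightarrow> nat \<Rightarrow> letter \<Rightarrow> word" where
  "alpha_letter p p' a = replicate p a @ [b]"
| "alpha_letter p p' b = replicate p' a @ [b]"

definition alpha :: "nat \<Rightarrow> nat \<Rightarrow> word \<Rightarrow> word" where
  "alpha p p' w = concat (map (alpha_letter p p') w)"

text \<open>Image of a right-infinite word (all letter images are nonempty, so the
  n-th letter of the image lies in the image of the prefix of length n+1).\<close>
definition alpha_inf :: "nat \<Rightarrow> nat \<Rightarrow> iword \<Rightarrow> iword" where
  "alpha_inf p p' W n = alpha p p' (map W [0..<Suc n]) ! n"

end

theory Submission
  imports Defs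
begin


lemma factor_infix: "factor (u @ v @ w) W \<Longrightarrow> factor v W"
proof -
  assume "factor (u @ v @ w) W"
  then obtain i where h: "u @ v @ w = map W [i..<i + length (u @ v @ w)]"
    unfolding factor_def by blast
  have "v = take (length v) (drop (length u) (u @ v @ w))" by simp
  also have "\<dots> = map W [i + length u..<i + length u + length v]"
    by (subst h) (simp add: drop_map take_map drop_upt take_upt)
  finally show ?thesis unfolding factor_def by blast
qed

lemma finite_letter: "finite (UNIV :: letter set)"
proof -
  have "UNIV = {a, b}" by (auto intro: letter.exhaust)
  then show ?thesis by (metis finite.emptyI finite_insert)
qed

lemma fin_fac: "finite (factors_of_length W n)"
proof -
  have "factors_of_length W n \<subseteq> {xs. set xs \<subseteq> UNIV \<and> length xs = n}"
    unfolding factors_of_length_def by auto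
  moreover have "finite {xs. set xs \<subseteq> (UNIV::letter set) \<and> length xs = n}"
    by (rule finite_lists_length_eq[OF finite_letter])
  ultimately show ?thesis by (rule finite_subset)
qed

lemma fac_mem: "map W [i..<i+n] \<in> factors_of_length W n"
  unfolding factors_of_length_def factor_def by auto

lemma fac_butlast: "factors_of_length W m = butlast ` factors_of_length W (Suc m)"
proof
  show "factors_of_length W m \<subseteq> butlast ` factors_of_length W (Suc m)"
  proof
    fix u assume "u \<in> factors_of_length W m"
    then obtain i where u: "u = map W [i..<i+m]" unfolding factors_of_length_def factor_def by auto
    have "u = butlast (map W [i..<i+Suc m])" using u by simp
    then show "u \<in> butlast ` factors_of_length W (Suc m)" using fac_mem by blast
  qed
next
  show "butlast ` factors_of_length W (Suc m) \<subseteq> factors_of_length W m"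
  proof
    fix u assume "u \<in> butlast ` factors_of_length W (Suc m)"
    then obtain i where u: "u = butlast (map W [i..<i+Suc m])" unfolding factors_of_length_def factor_def by auto
    have "u = map W [i..<i+m]" using u by simp
    then show "u \<in> factors_of_length W m" using fac_mem by blast
  qed
qed

lemma card_mono_fac: "card (factors_of_length W m) \<le> card (factors_of_length W (Suc m))"
  by (subst fac_butlast) (rule card_image_le[OF fin_fac])

lemma card_fac0: "card (factors_of_length W 0) = 1"
proof -
  have "factors_of_length W 0 = {[]}" unfolding factors_of_length_def factor_def by auto
  then show ?thesis by simp
qed

lemma exists_eq_step:
  assumes "card (factors_of_length W k) \<le> k"
  shows "\<exists>m<k. card (factors_of_length W m) = card (factors_of_length W (Suc m))"
proof (rule ccontr)
  assume "\<not> ?thesis"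
  then have st: "\<And>m. m < k \<Longrightarrow> card (factors_of_length W m) < card (factors_of_length W (Suc m))"
    using card_mono_fac le_neq_implies_less by blast
  have "\<And>n. n \<le> k \<Longrightarrow> card (factors_of_length W n) \<ge> n + 1"
  proof -
    fix n show "n \<le> k \<Longrightarrow> card (factors_of_length W n) \<ge> n + 1"
    proof (induction n)
      case 0 then show ?case by (simp add: card_fac0)
    next
      case (Suc n) then show ?case using st[of n] by simp
    qed
  qed
  from this[of k] assms show False by simp
qed

lemma morse_hedlund:
  assumes "card (factors_of_length W k) \<le> k"
  shows "eventually_periodic W"
proof -
  obtain m where m: "card (factors_of_length W m) = card (factors_of_length W (Suc m))"
    using exists_eq_step[OF assms] by blast
  have inj: "inj_on butlast (factors_of_length W (Suc m))"
    using m fac_butlast[of W m] inj_on_iff_eq_card[OF fin_fac, of butlast W "Suc m"] by simp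
  define g where "g i = map W [i..<i+m]" for i
  have step: "g i = g j \<Longrightarrow> W (i+m) = W (j+m) \<and> g (Suc i) = g (Suc j)" for i j
  proof -
    assume "g i = g j"
    then have "butlast (map W [i..<i+Suc m]) = butlast (map W [j..<j+Suc m])"
      unfolding g_def by simp
    then have e: "map W [i..<i+Suc m] = map W [j..<j+Suc m]"
      using inj fac_mem unfolding inj_on_def by blast
    then have "last (map W [i..<i+Suc m]) = last (map W [j..<j+Suc m])" by simp
    then have 1: "W (i+m) = W (j+m)" by (simp add: last_map)
    have tl_eq: "tl (map W [x..<x+Suc m]) = map W [Suc x..<Suc x+m]" for x
      by (simp del: upt_Suc add: upt_conv_Cons)
    have "tl (map W [i..<i+Suc m]) = tl (map W [j..<j+Suc m])" using e by (simp only:)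
    then have "g (Suc i) = g (Suc j)" unfolding g_def tl_eq .
    with 1 show ?thesis by simp
  qed
  have "range g \<subseteq> factors_of_length W m" unfolding g_def using fac_mem by auto
  then have "finite (range g)" using fin_fac finite_subset by blast
  then have "\<not> inj g" using finite_imageD[of g UNIV] infinite_UNIV_nat by blast
  then obtain i j where ij: "i \<noteq> j" "g i = g j" unfolding inj_on_def by blast
  then obtain i j where ij: "i < j" "g i = g j"
  proof (cases "i < j")
    case True then show ?thesis using ij that by blast
  next
    case False then show ?thesis using ij that[of j i] by simp
  qed
  have gt: "g (i+t) = g (j+t)" for t
  proof (induction t)
    case 0 then show ?case using ij(2) by simp
  next
    case (Suc t) then have "g (Suc (i+t)) = g (Suc (j+t))" using step by blast
    then show ?case by simp
  qed
  have per: "\<forall>n\<ge>i+m. W (n + (j - i)) = W n"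
  proof (intro allI impI)
    fix n assume "n \<ge> i + m"
    define t where "t = n - (i + m)"
    have n: "n = i + t + m" using \<open>n \<ge> i + m\<close> unfolding t_def by simp
    have "W (i+t+m) = W (j+t+m)" using step[OF gt[of t]] by simp
    moreover have "n + (j - i) = j + t + m" using n ij by simp
    ultimately show "W (n + (j - i)) = W n" using n by (simp add: ac_simps)
  qed
  have "j - i > 0" using ij by simp
  then show ?thesis unfolding eventually_periodic_def using per by blast
qed

lemma factor_len: "factor u W \<Longrightarrow> length u = n \<Longrightarrow> \<exists>i. u = map W [i..<i+n]"
  unfolding factor_def by blast

lemma recurrent:
  assumes st: "sturmian S" and f: "factor u S"
  shows "\<exists>i>0. u = map S [i..<i + length u]"
proof (rule ccontr)
  assume na: "\<not> ?thesis"
  define S' where "S' n = S (Suc n)" for n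
  let ?k = "length u"
  have "factors_of_length S' ?k \<subseteq> factors_of_length S ?k - {u}"
  proof
    fix v assume "v \<in> factors_of_length S' ?k"
    then obtain i where v: "v = map S' [i..<i+?k]" "length v = ?k"
      unfolding factors_of_length_def factor_def by auto
    have "v = map S [Suc i..<Suc i + ?k]" unfolding v(1) S'_def
      by (rule nth_equalityI) (simp_all del: upt_Suc)
    moreover have "v \<noteq> u"
    proof
      assume "v = u"
      then have "u = map S [Suc i..<Suc i + ?k]" using \<open>v = map S [Suc i..<Suc i + ?k]\<close> by simp
      then show False using na by blast
    qed
    ultimately show "v \<in> factors_of_length S ?k - {u}" using fac_mem[of S "Suc i" ?k] by (simp del: upt_Suc)
  qed
  moreover have "u \<in> factors_of_length S ?k" using f unfolding factors_of_length_def by simp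
  ultimately have "card (factors_of_length S' ?k) \<le> card (factors_of_length S ?k - {u})"
    by (intro card_mono) (simp_all add: fin_fac)
  also have "\<dots> = card (factors_of_length S ?k) - 1"
    using \<open>u \<in> factors_of_length S ?k\<close> by (simp add: card_Diff_singleton fin_fac)
  finally have "card (factors_of_length S' ?k) \<le> card (factors_of_length S ?k) - 1" .
  then have "card (factors_of_length S' ?k) \<le> ?k" using st unfolding sturmian_def by simp
  then have "eventually_periodic S'" by (rule morse_hedlund)
  then obtain q N where q: "q > 0" "\<forall>n\<ge>N. S' (n+q) = S' n" unfolding eventually_periodic_def by blast
  have "\<forall>n\<ge>Suc N. S (n+q) = S n"
  proof (intro allI impI)
    fix n assume "n \<ge> Suc N"
    then obtain n' where "n = Suc n'" "n' \<ge> N" by (cases n) auto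
    then show "S (n+q) = S n" using q(2)[rule_format, of n'] unfolding S'_def by simp
  qed
  then have "eventually_periodic S" using q(1) unfolding eventually_periodic_def by blast
  then show False using st unfolding sturmian_def by simp
qed

lemma recurrent_len:
  assumes "sturmian S" "factor u S" "length u = n"
  shows "\<exists>i>0. u = map S [i..<i + n]"
  using recurrent[OF assms(1,2)] assms(3) by simp



definition ex :: "nat \<Rightarrow> nat \<Rightarrow> letter \<Rightarrow> nat" where
  "ex p p' c = (case c of a \<Rightarrow> p | b \<Rightarrow> p')"

lemma al: "alpha_letter p p' c = replicate (ex p p' c) a @ [b]"
  by (cases c) (auto simp: ex_def)

lemma alpha_Nil[simp]: "alpha p p' [] = []" by (simp add: alpha_def)
lemma alpha_Cons[simp]: "alpha p p' (c # w) = replicate (ex p p' c) a @ [b] @ alpha p p' w"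
  by (simp add: alpha_def al)
lemma alpha_append[simp]: "alpha p p' (u @ v) = alpha p p' u @ alpha p p' v"
  by (simp add: alpha_def)
lemma len_alpha: "length (alpha p p' w) \<ge> length w"
  by (induction w) auto

definition pos :: "nat \<Rightarrow> nat \<Rightarrow> iword \<Rightarrow> nat \<Rightarrow> nat" where
  "pos p p' S i = length (alpha p p' (map S [0..<i]))"

lemma pos_0[simp]: "pos p p' S 0 = 0" by (simp add: pos_def)
lemma pos_Suc: "pos p p' S (Suc i) = pos p p' S i + ex p p' (S i) + 1"
  by (simp add: pos_def)
lemma pos_ge: "pos p p' S i \<ge> i"
  unfolding pos_def using len_alpha[of "map S [0..<i]" p p'] by simp

lemma alpha_split: "N \<le> M \<Longrightarrow> alpha p p' (map S [0..<M]) = alpha p p' (map S [0..<N]) @ alpha p p' (map S [N..<M])"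
proof -
  assume "N \<le> M"
  then have "[0..<M] = [0..<N] @ [N..<M]" by (metis le0 upt_add_eq_append le_add_diff_inverse)
  then show ?thesis by simp
qed

lemma T_nth:
  assumes "n < length (alpha p p' (map S [0..<N]))"
  shows "alpha_inf p p' S n = alpha p p' (map S [0..<N]) ! n"
proof (cases "N \<le> Suc n")
  case True
  show ?thesis unfolding alpha_inf_def alpha_split[OF True, of p p' S] using assms by (simp add: nth_append)
next
  case False
  then have le: "Suc n \<le> N" by simp
  have "n < length (alpha p p' (map S [0..<Suc n]))"
    using len_alpha[of "map S [0..<Suc n]" p p'] by (simp del: upt_Suc)
  then show ?thesis unfolding alpha_inf_def alpha_split[OF le, of p p' S] by (simp add: nth_append del: upt_Suc)
qed

lemma T_at:
  assumes "i \<le> j" "t < length (alpha p p' (map S [i..<j]))"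
  shows "alpha_inf p p' S (pos p p' S i + t) = alpha p p' (map S [i..<j]) ! t"
proof -
  have e: "alpha p p' (map S [0..<j]) = alpha p p' (map S [0..<i]) @ alpha p p' (map S [i..<j])"
    by (rule alpha_split[OF assms(1)])
  have "pos p p' S i + t < length (alpha p p' (map S [0..<j]))"
    using assms(2) unfolding e pos_def by simp
  then have "alpha_inf p p' S (pos p p' S i + t) = alpha p p' (map S [0..<j]) ! (pos p p' S i + t)"
    by (rule T_nth)
  also have "\<dots> = alpha p p' (map S [i..<j]) ! t" unfolding e pos_def by (simp add: nth_append)
  finally show ?thesis .
qed

lemma T_block:
  assumes "t \<le> ex p p' (S i)"
  shows "alpha_inf p p' S (pos p p' S i + t) = (if t < ex p p' (S i) then a else b)"
proof -
  have "alpha_inf p p' S (pos p p' S i + t) = alpha p p' (map S [i..<Suc i]) ! t"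
    by (rule T_at) (use assms in simp_all)
  also have "\<dots> = (if t < ex p p' (S i) then a else b)" using assms by (simp add: nth_append)
  finally show ?thesis .
qed

lemma cover: "\<exists>i. pos p p' S i \<le> n \<and> n < pos p p' S (Suc i)"
proof -
  have "n < pos p p' S (Suc n)" using pos_ge[of "Suc n" p p' S] by simp
  then have ex1: "\<exists>i. n < pos p p' S i" by blast
  define i0 where "i0 = (LEAST i. n < pos p p' S i)"
  have h: "n < pos p p' S i0" unfolding i0_def by (rule LeastI_ex[OF ex1])
  have "i0 \<noteq> 0" using h by (cases i0) auto
  then obtain i where i: "i0 = Suc i" by (cases i0) auto
  have "\<not> n < pos p p' S i" using not_less_Least[of i "\<lambda>i. n < pos p p' S i"] i unfolding i0_def by simp
  then have "pos p p' S i \<le> n \<and> n < pos p p' S (Suc i)" using h i by simp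
  then show ?thesis by blast
qed

lemma T_b:
  assumes "alpha_inf p p' S n = b"
  shows "\<exists>i. n = pos p p' S i + ex p p' (S i)"
proof -
  obtain i where i: "pos p p' S i \<le> n" "n < pos p p' S (Suc i)" using cover by blast
  define t where "t = n - pos p p' S i"
  have n: "n = pos p p' S i + t" using i unfolding t_def by simp
  have "t \<le> ex p p' (S i)" using i(2) n pos_Suc[of p p' S i] by simp
  from T_block[of t p p' S i, OF this] assms n \<open>t \<le> ex p p' (S i)\<close> have "t = ex p p' (S i)"
    by (cases "t < ex p p' (S i)") auto
  then show ?thesis using n by blast
qed

lemma factor_alpha:
  assumes "i \<le> j"
  shows "factor (alpha p p' (map S [i..<j])) (alpha_inf p p' S)"
  unfolding factor_def
proof (intro exI[of _ "pos p p' S i"])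
  show "alpha p p' (map S [i..<j]) = map (alpha_inf p p' S) [pos p p' S i..<pos p p' S i + length (alpha p p' (map S [i..<j]))]"
    by (rule nth_equalityI) (simp_all add: T_at[OF assms])
qed

lemma match_block:
  assumes "\<forall>t\<le>x. alpha_inf p p' S (pos p p' S j + t) = (replicate x a @ [b]) ! t"
  shows "ex p p' (S j) = x"
proof (rule ccontr)
  assume ne: "ex p p' (S j) \<noteq> x"
  show False
  proof (cases "ex p p' (S j) < x")
    case True
    have "alpha_inf p p' S (pos p p' S j + ex p p' (S j)) = b" using T_block[of "ex p p' (S j)" p p' S j] by simp
    moreover have "alpha_inf p p' S (pos p p' S j + ex p p' (S j)) = a"
      using assms[rule_format, of "ex p p' (S j)"] True by (simp add: nth_append)
    ultimately show False by simp
  next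
    case False
    then have lt: "x < ex p p' (S j)" using ne by simp
    have "alpha_inf p p' S (pos p p' S j + x) = a" using T_block[of x p p' S j] lt by simp
    moreover have "alpha_inf p p' S (pos p p' S j + x) = b"
      using assms[rule_format, of x] by (simp add: nth_append)
    ultimately show False by simp
  qed
qed

lemma ge_block:
  assumes "\<forall>t\<le>x. alpha_inf p p' S (pos p p' S j + t) = a"
  shows "ex p p' (S j) > x"
proof (rule ccontr)
  assume "\<not> ?thesis"
  then have "ex p p' (S j) \<le> x" by simp
  then have "alpha_inf p p' S (pos p p' S j + ex p p' (S j)) = a" using assms by simp
  moreover have "alpha_inf p p' S (pos p p' S j + ex p p' (S j)) = b" using T_block[of "ex p p' (S j)" p p' S j] by simp
  ultimately show False by simp
qed

lemma ex_inj: "p \<noteq> p' \<Longrightarrow> ex p p' c = ex p p' d \<Longrightarrow> c = d"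
  by (cases c; cases d) (auto simp: ex_def)

lemma parse:
  assumes "p \<noteq> p'"
    and "\<forall>t<length (alpha p p' w). alpha_inf p p' S (pos p p' S i + t) = alpha p p' w ! t"
  shows "map S [i..<i + length w] = w \<and> pos p p' S (i + length w) = pos p p' S i + length (alpha p p' w)"
  using assms(2)
proof (induction w arbitrary: i)
  case Nil then show ?case by simp
next
  case (Cons c w)
  have "\<forall>t\<le>ex p p' c. alpha_inf p p' S (pos p p' S i + t) = (replicate (ex p p' c) a @ [b]) ! t"
  proof (intro allI impI)
    fix t assume "t \<le> ex p p' c"
    then show "alpha_inf p p' S (pos p p' S i + t) = (replicate (ex p p' c) a @ [b]) ! t"
      using Cons.prems[rule_format, of t] by (simp add: nth_append)
  qed
  then have e: "ex p p' (S i) = ex p p' c" by (rule match_block)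
  then have si: "S i = c" using ex_inj[OF assms(1)] by blast
  have ps: "pos p p' S (Suc i) = pos p p' S i + ex p p' c + 1" using pos_Suc[of p p' S i] e by simp
  have "\<forall>t<length (alpha p p' w). alpha_inf p p' S (pos p p' S (Suc i) + t) = alpha p p' w ! t"
  proof (intro allI impI)
    fix t assume t: "t < length (alpha p p' w)"
    have "alpha_inf p p' S (pos p p' S (Suc i) + t) = alpha_inf p p' S (pos p p' S i + (ex p p' c + 1 + t))"
      using ps by (simp add: ac_simps)
    also have "\<dots> = alpha p p' (c # w) ! (ex p p' c + 1 + t)"
      using Cons.prems[rule_format, of "ex p p' c + 1 + t"] t by simp
    also have "\<dots> = alpha p p' w ! t" by (simp add: nth_append)
    finally show "alpha_inf p p' S (pos p p' S (Suc i) + t) = alpha p p' w ! t" .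
  qed
  from Cons.IH[OF this] have ih: "map S [Suc i..<Suc i + length w] = w"
    "pos p p' S (Suc i + length w) = pos p p' S (Suc i) + length (alpha p p' w)" by auto
  have "[i..<i + length (c # w)] = i # [Suc i..<Suc i + length w]" by (simp add: upt_conv_Cons del: upt_Suc)
  then have "map S [i..<i + length (c # w)] = c # w" using ih(1) si by simp
  moreover have "pos p p' S (i + length (c # w)) = pos p p' S i + length (alpha p p' (c # w))"
    using ih(2) ps by simp
  ultimately show ?case by simp
qed

lemma occ_infix:
  assumes "w = map T [k..<k + n]" "length w = n" "w = u @ v @ z" "t < length v"
  shows "T (k + length u + t) = v ! t"
proof -
  have "w ! (length u + t) = v ! t" using assms(3,4) by (simp add: nth_append)
  moreover have "length u + t < n" using assms(2,3,4) by auto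
  then have "map T [k..<k + n] ! (length u + t) = T (k + (length u + t))"
    by (simp del: upt_Suc)
  then have "w ! (length u + t) = T (k + (length u + t))" using assms(1) by simp
  ultimately show ?thesis by (simp add: ac_simps)
qed



definition beta :: "nat \<Rightarrow> nat \<Rightarrow> word \<Rightarrow> word" where
  "beta p p' w = concat (map (\<lambda>c. b # replicate (ex p p' c) a) w)"

lemma rev_alpha: "rev (alpha p p' w) = beta p p' (rev w)"
  by (induction w) (auto simp: beta_def)

lemma b_alpha: "b # alpha p p' w = beta p p' w @ [b]"
  by (induction w) (auto simp: beta_def)

lemma pal_img:
  assumes "palindrome X"
  shows "palindrome (replicate m a @ [b] @ alpha p p' X @ replicate m a)"
proof -
  have "rev (replicate m a @ [b] @ alpha p p' X @ replicate m a)
      = replicate m a @ beta p p' X @ [b] @ replicate m a"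
    using assms unfolding palindrome_def by (simp add: rev_alpha)
  also have "\<dots> = replicate m a @ [b] @ alpha p p' X @ replicate m a"
    using b_alpha[of p p' X] by simp
  finally show ?thesis unfolding palindrome_def .
qed

lemma mp_intro: "palindrome P \<Longrightarrow> l \<noteq> l' \<Longrightarrow> factor (l # P @ [l']) W \<Longrightarrow> maximal_pal P W"
  unfolding maximal_pal_def by blast

lemma seg: "map S [i..<i + (n+2)] = S i # map S [Suc i..<Suc i + n] @ [S (Suc i + n)]"
proof -
  have "[i..<i + (n+2)] = [i..<Suc i + n] @ [Suc i + n]" by simp
  also have "[i..<Suc i + n] = i # [Suc i..<Suc i + n]" by (simp add: upt_conv_Cons del: upt_Suc)
  finally show ?thesis by simp
qed

theorem lemma2:
  fixes p p' :: nat and S :: iword and X :: word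
  assumes "p \<ge> 1" and "p' \<ge> 1" and "p = p' + 1 \<or> p' = p + 1"
    and "sturmian S"
    and "palindrome X"
  shows "maximal_pal X S \<longleftrightarrow>
    maximal_pal (replicate (min p p') a @ [b] @ alpha p p' X @ replicate (min p p') a)
                (alpha_inf p p' S)"
proof -
  define m where "m = min p p'"
  have pp: "p \<noteq> p'" using assms(3) by auto
  have exv: "ex p p' c = m \<or> ex p p' c = Suc m" for c
    using assms(3) unfolding m_def ex_def by (cases c) auto
  have exd: "c \<noteq> d \<Longrightarrow> ex p p' c \<noteq> ex p p' d" for c d
    using pp unfolding ex_def by (cases c; cases d) auto
  have exd2: "ex p p' c \<noteq> ex p p' d \<Longrightarrow> c \<noteq> d" for c d by auto
  have lett: "l \<noteq> l' \<Longrightarrow> (l = a \<and> l' = b) \<or> (l = b \<and> l' = a)" for l l'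
    by (cases l; cases l') auto
  define P where "P = replicate m a @ [b] @ alpha p p' X @ replicate m a"
  have palP: "palindrome P" unfolding P_def by (rule pal_img[OF assms(5)])
  let ?T = "alpha_inf p p' S"
  have "maximal_pal X S \<longleftrightarrow> maximal_pal P ?T"
  proof
    assume "maximal_pal X S"
    then have "\<exists>l l'. l \<noteq> l' \<and> factor (l # X @ [l']) S"
      unfolding maximal_pal_def by (rule conjunct2)
    then obtain l l' where ll: "l \<noteq> l'" "factor (l # X @ [l']) S" by (elim exE conjE)
    have "\<exists>i>0. l # X @ [l'] = map S [i..<i + (length X + 2)]"
      by (rule recurrent_len[OF assms(4) ll(2)]) simp
    then obtain i where i: "i > 0" "l # X @ [l'] = map S [i..<i + (length X + 2)]"
      by (elim exE conjE)
    obtain i0 where i0: "i = Suc i0" using i(1) by (cases i) auto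
    have occ: "map S [i0..<i0 + (Suc (length X) + 2)] = S i0 # l # X @ [l']"
    proof -
      have "map S [i0..<i0 + (Suc (length X) + 2)] = S i0 # map S [i..<i + (length X + 2)]"
        unfolding i0 by (simp add: upt_conv_Cons del: upt_Suc)
      also have "map S [i..<i + (length X + 2)] = l # X @ [l']"
        using i(2) by (rule sym)
      finally show ?thesis .
    qed
    have "factor (alpha p p' (map S [i0..<i0 + (Suc (length X) + 2)])) ?T"
      by (rule factor_alpha) simp
    then have f: "factor (replicate (ex p p' (S i0)) a @ [b] @ replicate (ex p p' l) a @ [b]
                  @ alpha p p' X @ replicate (ex p p' l') a @ [b]) ?T"
      unfolding occ by simp
    have "ex p p' l \<noteq> ex p p' l'" using exd[OF ll(1)] .
    then consider "ex p p' l = Suc m" "ex p p' l' = m" | "ex p p' l = m" "ex p p' l' = Suc m"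
      using exv[of l] exv[of l'] by auto
    then show "maximal_pal P ?T"
    proof cases
      case 1
      have eq1: "replicate (ex p p' (S i0)) a @ [b] @ replicate (ex p p' l) a @ [b]
                  @ alpha p p' X @ replicate (ex p p' l') a @ [b]
            = (replicate (ex p p' (S i0)) a @ [b]) @ (a # P @ [b]) @ []"
        unfolding 1 P_def by simp
      have "factor (a # P @ [b]) ?T" by (rule factor_infix[OF f[unfolded eq1]])
      then show ?thesis using palP
        by (intro mp_intro) simp_all
    next
      case 2
      have eq2: "replicate (ex p p' (S i0)) a @ [b] @ replicate (ex p p' l) a @ [b]
                  @ alpha p p' X @ replicate (ex p p' l') a @ [b]
            = (replicate (ex p p' (S i0)) a) @ (b # P @ [a]) @ [b]"
        unfolding 2 P_def by (simp add: replicate_append_same[symmetric])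
      have "factor (b # P @ [a]) ?T" by (rule factor_infix[OF f[unfolded eq2]])
      then show ?thesis using palP
        by (intro mp_intro) simp_all
    qed
  next
    assume "maximal_pal P ?T"
    then have "\<exists>l l'. l \<noteq> l' \<and> factor (l # P @ [l']) ?T"
      unfolding maximal_pal_def by (rule conjunct2)
    then obtain l l' where ll: "l \<noteq> l'" and fl: "factor (l # P @ [l']) ?T" by (elim exE conjE)
    have "\<exists>k. l # P @ [l'] = map ?T [k..<k + (length P + 2)]"
      by (rule factor_len[OF fl]) simp
    then obtain k where fk: "l # P @ [l'] = map ?T [k..<k + (length P + 2)]" by (elim exE conjE)
    have fkl: "length (l # P @ [l']) = length P + 2" by simp
    let ?aX = "alpha p p' X"
    from lett[OF ll] show "maximal_pal X S"
    proof
      assume lab: "l = a \<and> l' = b"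
      have w: "l # P @ [l'] = replicate (Suc m) a @ [b] @ (?aX @ (replicate m a @ [b]))"
        using lab unfolding P_def by simp
      have h1: "?T k = a"
        using occ_infix[OF fk fkl, of "[]" "replicate (Suc m) a" "[b] @ (?aX @ (replicate m a @ [b]))" 0] w
        by simp
      have h2: "?T (k + Suc m) = b"
        using occ_infix[OF fk fkl, of "replicate (Suc m) a" "[b]" "?aX @ (replicate m a @ [b])" 0] w
        by simp
      obtain i0 where i0: "k + Suc m = pos p p' S i0 + ex p p' (S i0)"
        using T_b[OF h2] by (elim exE)
      have e0: "ex p p' (S i0) = Suc m"
      proof (rule ccontr)
        assume "ex p p' (S i0) \<noteq> Suc m"
        then have em: "ex p p' (S i0) = m" using exv[of "S i0"] by simp
        then have pk: "pos p p' S i0 = k + 1" using i0 by simp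
        then obtain i1 where i1: "i0 = Suc i1" by (cases i0) auto
        have "pos p p' S i1 + ex p p' (S i1) = k" using pk pos_Suc[of p p' S i1] i1 by simp
        moreover have "?T (pos p p' S i1 + ex p p' (S i1)) = b"
          using T_block[of "ex p p' (S i1)" p p' S i1] by simp
        ultimately show False using h1 by simp
      qed
      define i where "i = Suc i0"
      have posi: "pos p p' S i = k + (Suc m + 1)" unfolding i_def using pos_Suc[of p p' S i0] i0 e0 by simp
      have h3: "\<forall>t<length ?aX. ?T (pos p p' S i + t) = ?aX ! t"
      proof (intro allI impI)
        fix t assume t: "t < length ?aX"
        show "?T (pos p p' S i + t) = ?aX ! t"
          using occ_infix[OF fk fkl, of "replicate (Suc m) a @ [b]" ?aX "replicate m a @ [b]" t] w t posi
          by simp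
      qed
      from parse[OF pp h3] have px: "map S [i..<i + length X] = X"
        "pos p p' S (i + length X) = pos p p' S i + length ?aX" by auto
      define j where "j = i + length X"
      have h4: "\<forall>t\<le>m. ?T (pos p p' S j + t) = (replicate m a @ [b]) ! t"
      proof (intro allI impI)
        fix t assume t: "t \<le> m"
        show "?T (pos p p' S j + t) = (replicate m a @ [b]) ! t"
          using occ_infix[OF fk fkl, of "replicate (Suc m) a @ [b] @ ?aX" "replicate m a @ [b]" "[]" t] w t posi px(2)
          unfolding j_def by (simp add: ac_simps)
      qed
      have ej: "ex p p' (S j) = m" by (rule match_block[OF h4])
      have ne: "S i0 \<noteq> S j" using e0 ej by (intro exd2) simp
      have "map S [i0..<i0 + (length X + 2)] = S i0 # X @ [S j]"
        unfolding seg using px(1) unfolding i_def j_def by simp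
      moreover have "length (S i0 # X @ [S j]) = length X + 2" by simp
      ultimately have "factor (S i0 # X @ [S j]) S" unfolding factor_def
        by (intro exI[of _ i0]) simp
      then show ?thesis using ne assms(5) by (intro mp_intro) simp_all
    next
      assume lab: "l = b \<and> l' = a"
      have w: "l # P @ [l'] = [b] @ (replicate m a @ [b]) @ (?aX @ replicate (Suc m) a)"
        using lab unfolding P_def by (simp add: replicate_append_same[symmetric])
      have h1: "?T k = b"
        using occ_infix[OF fk fkl, of "[]" "[b]" "(replicate m a @ [b]) @ (?aX @ replicate (Suc m) a)" 0] w
        by simp
      obtain i0 where i0: "k = pos p p' S i0 + ex p p' (S i0)"
        using T_b[OF h1] by (elim exE)
      define i where "i = Suc i0"
      have posi: "pos p p' S i = k + 1" unfolding i_def using pos_Suc[of p p' S i0] i0 by simp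
      have h2: "\<forall>t\<le>m. ?T (pos p p' S i + t) = (replicate m a @ [b]) ! t"
      proof (intro allI impI)
        fix t assume t: "t \<le> m"
        show "?T (pos p p' S i + t) = (replicate m a @ [b]) ! t"
          using occ_infix[OF fk fkl, of "[b]" "replicate m a @ [b]" "?aX @ replicate (Suc m) a" t] w t posi
          by simp
      qed
      have ei: "ex p p' (S i) = m" by (rule match_block[OF h2])
      have posi2: "pos p p' S (Suc i) = k + (m + 2)" using pos_Suc[of p p' S i] ei posi by simp
      have h3: "\<forall>t<length ?aX. ?T (pos p p' S (Suc i) + t) = ?aX ! t"
      proof (intro allI impI)
        fix t assume t: "t < length ?aX"
        show "?T (pos p p' S (Suc i) + t) = ?aX ! t"
          using occ_infix[OF fk fkl, of "[b] @ replicate m a @ [b]" ?aX "replicate (Suc m) a" t] w t posi2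
          by simp
      qed
      from parse[OF pp h3] have px: "map S [Suc i..<Suc i + length X] = X"
        "pos p p' S (Suc i + length X) = pos p p' S (Suc i) + length ?aX" by auto
      define j where "j = Suc i + length X"
      have h4: "\<forall>t\<le>m. ?T (pos p p' S j + t) = a"
      proof (intro allI impI)
        fix t assume t: "t \<le> m"
        have r: "replicate (Suc m) a ! t = a" using t by (simp del: replicate_Suc)
        show "?T (pos p p' S j + t) = a"
          using r occ_infix[OF fk fkl, of "[b] @ replicate m a @ [b] @ ?aX" "replicate (Suc m) a" "[]" t] w t posi2 px(2)
          unfolding j_def by (simp add: ac_simps)
      qed
      have "ex p p' (S j) > m" by (rule ge_block[OF h4])
      then have ej: "ex p p' (S j) = Suc m" using exv by force
      have ne: "S i \<noteq> S j" using ei ej by (intro exd2) simp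
      have "map S [i..<i + (length X + 2)] = S i # X @ [S j]"
        unfolding seg using px(1) unfolding j_def by simp
      moreover have "length (S i # X @ [S j]) = length X + 2" by simp
      ultimately have "factor (S i # X @ [S j]) S" unfolding factor_def
        by (intro exI[of _ i]) simp
      then show ?thesis using ne assms(5) by (intro mp_intro) simp_all
    qed
  qed
  then show ?thesis unfolding P_def m_def .
qed


end
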